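(* Let $G$ be a finite simple graph, let $I$ be a maximum critical independent set in $G$, and let $X=I\cup N(I)$. Then $\operatorname{diadem}(G)\cup N(\operatorname{diadem}(G)) = X$.
   Context: For $Y\subseteq V(G)$, $N(Y)$ is the set of vertices adjacent to some vertex of $Y$, and $d(Y)=|Y|-|N(Y)|$. An independent set $S$ is critical if $d(S)=\max\{d(Y):Y\subseteq V(G)\}$; the empty set may be critical. A maximum critical independent set is a critical independent set of maximum cardinality. $\operatorname{diadem}(G)$ is the union of all maximum critical independent sets of $G$. *)

theory Defs
  imports Main
begin

definition simple_graph :: "'a set \<Rightarrow> ('a \<Rightarrow> 'a \<Rightarrow> bool) \<Rightarrow> bool" where
  "simple_graph V E \<longleftrightarrow> finite V \<and> (\<forall>x y. E x y \<longrightarrow> x \<in> V \<and> y \<in> V)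
     \<and> (\<forall>x y. E x y \<longrightarrow> E y x) \<and> (\<forall>x. \<not> E x x)"

definition nbhd :: "'a set \<Rightarrow> ('a \<Rightarrow> 'a \<Rightarrow> bool) \<Rightarrow> 'a set \<Rightarrow> 'a set" where
  "nbhd V E Y = {v \<in> V. \<exists>y\<in>Y. E v y}"

definition diff :: "'a set \<Rightarrow> ('a \<Rightarrow> 'a \<Rightarrow> bool) \<Rightarrow> 'a set \<Rightarrow> int" where
  "diff V E Y = int (card Y) - int (card (nbhd V E Y))"

definition independent :: "'a set \<Rightarrow> ('a \<Rightarrow> 'a \<Rightarrow> bool) \<Rightarrow> 'a set \<Rightarrow> bool" where
  "independent V E S \<longleftrightarrow> S \<subseteq> V \<and> (\<forall>x\<in>S. \<forall>y\<in>S. \<not> E x y)"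

definition critical_independent :: "'a set \<Rightarrow> ('a \<Rightarrow> 'a \<Rightarrow> bool) \<Rightarrow> 'a set \<Rightarrow> bool" where
  "critical_independent V E S \<longleftrightarrow> independent V E S \<and>
     diff V E S = Max ((diff V E) ` Pow V)"

definition max_critical_independent :: "'a set \<Rightarrow> ('a \<Rightarrow> 'a \<Rightarrow> bool) \<Rightarrow> 'a set \<Rightarrow> bool" where
  "max_critical_independent V E S \<longleftrightarrow> critical_independent V E S \<and>
     (\<forall>T. critical_independent V E T \<longrightarrow> card T \<le> card S)"

definition diadem :: "'a set \<Rightarrow> ('a \<Rightarrow> 'a \<Rightarrow> bool) \<Rightarrow> 'a set" where
  "diadem V E = \<Union> {S. max_critical_independent V E S}"

end

theory Submission
  imports Defs
begin

lemma nb_sub: "nbhd V E S \<subseteq> V" by (auto simp: nbhd_def)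
lemma nb_fin: "finite V \<Longrightarrow> finite (nbhd V E S)" using nb_sub finite_subset by metis
lemma nb_Un: "nbhd V E (S \<union> T) = nbhd V E S \<union> nbhd V E T" by (auto simp: nbhd_def)
lemma nb_mono: "S \<subseteq> T \<Longrightarrow> nbhd V E S \<subseteq> nbhd V E T" by (auto simp: nbhd_def)

lemma supermod:
  assumes "finite V" "finite S" "finite T"
  shows "diff V E S + diff V E T \<le> diff V E (S \<union> T) + diff V E (S \<inter> T)"
proof -
  have 1: "card (S \<union> T) + card (S \<inter> T) = card S + card T" using card_Un_Int[OF assms(2,3)] by simp
  have 2: "card (nbhd V E S \<union> nbhd V E T) + card (nbhd V E S \<inter> nbhd V E T)
     = card (nbhd V E S) + card (nbhd V E T)" using card_Un_Int[OF nb_fin[OF assms(1)] nb_fin[OF assms(1)]] by simp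
  have 3: "card (nbhd V E (S \<inter> T)) \<le> card (nbhd V E S \<inter> nbhd V E T)"
    by (rule card_mono[OF finite_Int[OF disjI1[OF nb_fin[OF assms(1)]]]]) (auto simp: nbhd_def)
  show ?thesis using 1 2 3 unfolding diff_def nb_Un by linarith
qed

lemma le_max:
  assumes "finite V" "S \<subseteq> V"
  shows "diff V E S \<le> Max ((diff V E) ` Pow V)"
  using assms by (intro Max_ge) auto

lemma crossing:
  assumes sg: "simple_graph V E" and iI: "independent V E I" and iJ: "independent V E J"
  defines "A \<equiv> I - nbhd V E J" and "B \<equiv> J - nbhd V E I"
  shows "diff V E I + diff V E J \<le> diff V E (A \<union> B) + diff V E (I \<inter> J)"
proof -
  let ?N = "nbhd V E"
  have fV: "finite V" and sym: "\<And>x y. E x y \<Longrightarrow> E y x" and irr: "\<And>x. \<not> E x x"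
    using sg by (auto simp: simple_graph_def)
  have IV: "I \<subseteq> V" and JV: "J \<subseteq> V" and iI': "\<And>x y. x \<in> I \<Longrightarrow> y \<in> I \<Longrightarrow> \<not> E x y"
    and iJ': "\<And>x y. x \<in> J \<Longrightarrow> y \<in> J \<Longrightarrow> \<not> E x y"
    using iI iJ by (auto simp: independent_def)
  have fI: "finite I" and fJ: "finite J" using IV JV fV finite_subset by auto
  define L1 where "L1 = I \<inter> ?N J"
  define L2 where "L2 = J \<inter> ?N I"
  have cI: "card I = card A + card L1"
  proof -
    have "I = A \<union> L1" "A \<inter> L1 = {}" unfolding A_def L1_def by auto
    thus ?thesis using card_Un_disjoint[of A L1] fI unfolding A_def L1_def by auto
  qed
  have cJ: "card J = card B + card L2"
  proof -
    have "J = B \<union> L2" "B \<inter> L2 = {}" unfolding B_def L2_def by auto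
    thus ?thesis using card_Un_disjoint[of B L2] fJ unfolding B_def L2_def by auto
  qed
  have ABC: "A \<inter> B = I \<inter> J" using iI' iJ' unfolding A_def B_def nbhd_def by auto
  have cK: "card (A \<union> B) + card (I \<inter> J) = card A + card B"
    using card_Un_Int[of A B] fI fJ ABC unfolding A_def B_def by auto
  have L12: "L1 \<inter> L2 = {}" using iI' iJ' unfolding L1_def L2_def nbhd_def by auto
  have cL: "card (L1 \<union> L2) = card L1 + card L2"
    using card_Un_disjoint[OF _ _ L12] fI fJ unfolding L1_def L2_def by auto
  have NKL: "?N (A \<union> B) \<inter> (L1 \<union> L2) = {}"
  proof (rule ccontr)
    assume "?N (A \<union> B) \<inter> (L1 \<union> L2) \<noteq> {}"
    then obtain x y where x: "x \<in> L1 \<union> L2" and y: "y \<in> A \<union> B" and e: "E x y"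
      by (auto simp: nbhd_def)
    have e': "E y x" using sym e .
    show False
    proof (cases "x \<in> L1")
      case True
      hence xI: "x \<in> I" by (simp add: L1_def)
      show False
      proof (cases "y \<in> A")
        case True thus False using iI' xI e by (auto simp: A_def)
      next
        case False
        hence "y \<in> J" "y \<notin> ?N I" "y \<in> V" using y JV by (auto simp: B_def)
        thus False using xI e' by (auto simp: nbhd_def)
      qed
    next
      case False
      hence xJ: "x \<in> J" using x by (simp add: L2_def)
      show False
      proof (cases "y \<in> B")
        case True thus False using iJ' xJ e by (auto simp: B_def)
      next
        case False
        hence "y \<in> I" "y \<notin> ?N J" "y \<in> V" using y IV by (auto simp: A_def)
        thus False using xJ e' by (auto simp: nbhd_def)
      qed
    qed
  qed
  have NKLsub: "?N (A \<union> B) \<union> (L1 \<union> L2) \<subseteq> ?N I \<union> ?N J"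
  proof -
    have "?N (A \<union> B) \<subseteq> ?N I \<union> ?N J"
      using nb_mono[of A I V E] nb_mono[of B J V E] nb_Un[of V E A B] by (auto simp: A_def B_def)
    moreover have "L1 \<union> L2 \<subseteq> ?N I \<union> ?N J" by (auto simp: L1_def L2_def)
    ultimately show ?thesis by blast
  qed
  have c1: "card (?N (A \<union> B)) + card (L1 \<union> L2) \<le> card (?N I \<union> ?N J)"
  proof -
    have "card (?N (A \<union> B) \<union> (L1 \<union> L2)) \<le> card (?N I \<union> ?N J)"
      by (rule card_mono[OF _ NKLsub]) (simp add: fV nb_fin)
    moreover have "card (?N (A \<union> B) \<union> (L1 \<union> L2)) = card (?N (A \<union> B)) + card (L1 \<union> L2)"
      by (rule card_Un_disjoint[OF _ _ NKL]) (auto simp: fV nb_fin L1_def L2_def fI fJ)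
    ultimately show ?thesis by simp
  qed
  have c2: "card (?N I \<union> ?N J) + card (?N I \<inter> ?N J) = card (?N I) + card (?N J)"
    using card_Un_Int[OF nb_fin[OF fV] nb_fin[OF fV]] by simp
  have c3: "card (?N (I \<inter> J)) \<le> card (?N I \<inter> ?N J)"
    by (rule card_mono[OF finite_Int[OF disjI1[OF nb_fin[OF fV]]]]) (auto simp: nbhd_def)
  show ?thesis unfolding diff_def using cI cJ cK cL c1 c2 c3 by linarith
qed

lemma key1:
  assumes sg: "simple_graph V E" and mI: "max_critical_independent V E I"
    and mJ: "max_critical_independent V E J"
  shows "J - nbhd V E I \<subseteq> I"
proof -
  let ?N = "nbhd V E"
  define M where "M = Max ((diff V E) ` Pow V)"
  have fV: "finite V" and sym: "\<And>x y. E x y \<Longrightarrow> E y x"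
    using sg by (auto simp: simple_graph_def)
  have iI: "independent V E I" and dI: "diff V E I = M" and cardI: "\<And>T. critical_independent V E T \<Longrightarrow> card T \<le> card I"
    using mI by (auto simp: max_critical_independent_def critical_independent_def M_def)
  have iJ: "independent V E J" and dJ: "diff V E J = M"
    using mJ by (auto simp: max_critical_independent_def critical_independent_def M_def)
  have IV: "I \<subseteq> V" and JV: "J \<subseteq> V" using iI iJ by (auto simp: independent_def)
  have fI: "finite I" and fJ: "finite J" using IV JV fV finite_subset by auto
  define A where "A = I - ?N J"
  define B where "B = J - ?N I"
  have cr: "diff V E I + diff V E J \<le> diff V E (A \<union> B) + diff V E (I \<inter> J)"
    using crossing[OF sg iI iJ] unfolding A_def B_def .
  have "diff V E (I \<inter> J) \<le> M" unfolding M_def by (rule le_max[OF fV]) (use IV in blast)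
  hence dK: "diff V E (A \<union> B) \<ge> M" using cr dI dJ by linarith
  have fK: "finite (A \<union> B)" using fI fJ by (auto simp: A_def B_def)
  have sm: "diff V E I + diff V E (A \<union> B) \<le> diff V E (I \<union> (A \<union> B)) + diff V E (I \<inter> (A \<union> B))"
    by (rule supermod[OF fV fI fK])
  have "diff V E (I \<inter> (A \<union> B)) \<le> M" unfolding M_def by (rule le_max[OF fV]) (use IV in blast)
  hence d1: "diff V E (I \<union> (A \<union> B)) \<ge> M" using sm dI dK by linarith
  have U: "I \<union> (A \<union> B) = I \<union> B" by (auto simp: A_def)
  have UV: "I \<union> B \<subseteq> V" using IV JV by (auto simp: B_def)
  have d2: "diff V E (I \<union> B) \<le> M" unfolding M_def using le_max[OF fV UV] .
  have ind: "independent V E (I \<union> B)"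
    unfolding independent_def
  proof (intro conjI ballI UV)
    fix x y assume x: "x \<in> I \<union> B" and y: "y \<in> I \<union> B"
    show "\<not> E x y"
    proof
      assume e: "E x y"
      have e': "E y x" using sym e .
      show False
      proof (cases "x \<in> I")
        case True
        show False
        proof (cases "y \<in> I")
          case True thus False using iI \<open>x \<in> I\<close> e by (auto simp: independent_def)
        next
          case False hence "y \<in> J" "y \<notin> ?N I" "y \<in> V" using y JV by (auto simp: B_def)
          thus False using \<open>x \<in> I\<close> e' by (auto simp: nbhd_def)
        qed
      next
        case False
        hence xB: "x \<in> J" "x \<notin> ?N I" "x \<in> V" using x JV by (auto simp: B_def)
        show False
        proof (cases "y \<in> I")
          case True thus False using xB e by (auto simp: nbhd_def)
        next
          case False hence "y \<in> J" using y by (auto simp: B_def)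
          thus False using iJ xB e by (auto simp: independent_def)
        qed
      qed
    qed
  qed
  have "critical_independent V E (I \<union> B)"
    unfolding critical_independent_def using ind d1 d2 U by (simp add: M_def)
  hence "card (I \<union> B) \<le> card I" by (rule cardI)
  moreover have "finite (I \<union> B)" using fI fJ by (auto simp: B_def)
  ultimately have "I \<union> B = I" using card_seteq[of "I \<union> B" I] by auto
  thus ?thesis unfolding B_def by blast
qed

lemma key2:
  assumes sg: "simple_graph V E" and mI: "max_critical_independent V E I"
    and mJ: "max_critical_independent V E J"
  shows "J \<union> nbhd V E J \<subseteq> I \<union> nbhd V E I"
proof -
  let ?N = "nbhd V E"
  define M where "M = Max ((diff V E) ` Pow V)"
  have fV: "finite V" and irr: "\<And>x. \<not> E x x"
    using sg by (auto simp: simple_graph_def)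
  have iI: "independent V E I" and dI: "diff V E I = M"
    using mI by (auto simp: max_critical_independent_def critical_independent_def M_def)
  have iJ: "independent V E J" and dJ: "diff V E J = M"
    using mJ by (auto simp: max_critical_independent_def critical_independent_def M_def)
  have cIJ: "card I = card J" using mI mJ by (auto simp: max_critical_independent_def intro: antisym)
  have IV: "I \<subseteq> V" and JV: "J \<subseteq> V" using iI iJ by (auto simp: independent_def)
  have fI: "finite I" and fJ: "finite J" using IV JV fV finite_subset by auto
  have k1: "J - ?N I \<subseteq> I" by (rule key1[OF sg mI mJ])
  have k2: "I - ?N J \<subseteq> J" by (rule key1[OF sg mJ mI])
  define C where "C = I \<inter> J"
  have sm: "diff V E I + diff V E J \<le> diff V E (I \<union> J) + diff V E C"
    unfolding C_def by (rule supermod[OF fV fI fJ])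
  have "diff V E (I \<union> J) \<le> M" unfolding M_def using le_max[OF fV] IV JV by auto
  moreover have "diff V E C \<le> M" unfolding M_def C_def by (rule le_max[OF fV]) (use IV in blast)
  ultimately have dC: "diff V E C = M" using sm dI dJ by linarith
  have sub: "I - J \<subseteq> ?N J - ?N I"
  proof
    fix x assume x: "x \<in> I - J"
    hence "x \<in> ?N J" using k2 by blast
    moreover have "x \<notin> ?N I" using x iI by (auto simp: nbhd_def independent_def)
    ultimately show "x \<in> ?N J - ?N I" by blast
  qed
  have NC: "?N C \<subseteq> ?N J" "?N C \<subseteq> ?N I" unfolding C_def by (auto simp: nbhd_def)
  have s2: "?N J - ?N I \<subseteq> ?N J - ?N C" using NC by blast
  have c1: "card (?N J - ?N I) \<le> card (?N J - ?N C)"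
    by (rule card_mono[OF _ s2]) (simp add: nb_fin[OF fV])
  have c2: "card (?N J - ?N C) = card (?N J) - card (?N C)"
    by (rule card_Diff_subset[OF nb_fin[OF fV] NC(1)])
  have c2': "card (?N C) \<le> card (?N J)" by (rule card_mono[OF nb_fin[OF fV] NC(1)])
  have c3: "int (card J) - int (card (?N J)) = int (card C) - int (card (?N C))"
    using dJ dC by (simp add: diff_def)
  have c4: "card (I - J) = card I - card C"
    unfolding C_def by (simp add: card_Diff_subset_Int fI)
  have c4': "card C \<le> card I" unfolding C_def by (rule card_mono[OF fI]) auto
  have "card (?N J - ?N I) \<le> card (I - J)" using c1 c2 c2' c3 c4 c4' cIJ by linarith
  hence eq: "I - J = ?N J - ?N I"
    using card_seteq[OF _ sub] nb_fin[OF fV] by blast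
  show ?thesis using eq k1 by blast
qed

theorem lemma2p1:
  fixes V :: "'a set" and E :: "'a \<Rightarrow> 'a \<Rightarrow> bool" and I :: "'a set"
  assumes "simple_graph V E"
    and "max_critical_independent V E I"
  shows "diadem V E \<union> nbhd V E (diadem V E) = I \<union> nbhd V E I"
proof
  show "diadem V E \<union> nbhd V E (diadem V E) \<subseteq> I \<union> nbhd V E I"
  proof
    fix x assume "x \<in> diadem V E \<union> nbhd V E (diadem V E)"
    then obtain S where S: "max_critical_independent V E S" and xS: "x \<in> S \<union> nbhd V E S"
      unfolding diadem_def nbhd_def by blast
    show "x \<in> I \<union> nbhd V E I" using key2[OF assms S] xS by blast
  qed
next
  have "I \<subseteq> diadem V E" using assms(2) unfolding diadem_def by blast
  thus "I \<union> nbhd V E I \<subseteq> diadem V E \<union> nbhd V E (diadem V E)"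
    using nb_mono[of I "diadem V E" V E] by blast
qed

end
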